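(* Let $V$ be a vector space over $\Bbbk$ of dimension $m\geq 2$, and write $W=V^*\otimes V$. The following data are given in $\mathtt{Rep}\,\operatorname{GL}(V)$. - The inclusion $\iota:\operatorname{PS}^m(W)\to W^{\otimes m}$. - The map $\mathrm{ev}^{\otimes m}:W^{\otimes m}\to\mathds{1}$ defined by $\alpha_1\otimes v_1\otimes\cdots\otimes\alpha_m\otimes v_m\mapsto\prod_i\alpha_i(v_i)$. - The inclusion $\kappa:\operatorname{PE}^m(V^* )\otimes V^{\otimes m}\oplus (V^* )^{\otimes m}\otimes\operatorname{PE}^m(V)\to(V^* )^{\otimes m}\otimes V^{\otimes m}$. - The map $\pi:(V^* )^{\otimes m}\otimes V^{\otimes m}\to\mathds{1}$ defined as the projection onto $\bigwedge^mV^*\otimes\bigwedge^mV$ followed by the isomorphism $\alpha_1\wedge\cdots\wedge\alpha_m\otimes v_1\wedge\cdots\wedge v_m\mapsto\sum_{\sigma\in S_m}(-1)^{|\sigma|}\prod_i\alpha_i(v_{\sigma(i)})$. Then there exist morphisms of $\operatorname{GL}(V)$-modules $$\varphi:\operatorname{PE}^m(V^* )\otimes V^{\otimes m}\oplus (V^* )^{\otimes m}\otimes\operatorname{PE}^m(V)\to\operatorname{PS}^m(W),\qquad \psi:(V^* )^{\otimes m}\otimes V^{\otimes m}\to W^{\otimes m}$$ such that $\iota\circ\varphi=\psi\circ\kappa$ and $\mathrm{ev}^{\otimes m}\circ\psi=\pi$.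
   Context: $\Bbbk$ is an algebraically closed field of characteristic $p>2$. For an object $X$ of a symmetric monoidal $\Bbbk$-linear category, $\operatorname{S}^jX$ and $\bigwedge^jX$ denote the largest quotients of $X^{\otimes j}$ on which $S_j$ (acting via the braiding) acts trivially, respectively by the sign. Since $p\neq 2$, $X^{\otimes 2}=\operatorname{S}^2X\oplus\bigwedge^2X$. The parity of a permutation $\sigma$ is written $|\sigma|$. Define $$\operatorname{PS}^j(X)=\bigoplus_{i=0}^{j-2}X^{\otimes i}\otimes\textstyle\bigwedge^2X\otimes X^{\otimes(j-i-2)},\qquad \operatorname{PE}^j(X)=\bigoplus_{i=0}^{j-2}X^{\otimes i}\otimes\operatorname{S}^2X\otimes X^{\otimes(j-i-2)}.$$ Each comes with a map to $X^{\otimes j}$ given by the inclusions of direct summands of $X^{\otimes j}$. This gives exact sequences $\operatorname{PS}^j(X)\to X^{\otimes j}\to\operatorname{S}^jX\to 0$ and $\operatorname{PE}^j(X)\to X^{\otimes j}\to\bigwedge^jX\to0$. *)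

theory Defs
  imports "HOL-Library.FuncSet" "HOL-Combinatorics.Combinatorics"
    "HOL-Computational_Algebra.Polynomial"
begin

definition alg_closed_field :: "'k::field itself \<Rightarrow> bool" where
  "alg_closed_field _ \<longleftrightarrow> (\<forall>q::'k poly. degree q > 0 \<longrightarrow> (\<exists>x. poly q x = 0))"

text \<open>V = k^m with standard basis e_0..e_(m-1), dual basis on V^*.
  An element of (V^*)^(tensor m) tensor V^(tensor m) (equivalently of W^(tensor m),
  W = V^* tensor V, with W-position l carrying the pair of indices (a l, b l))
  is given by its coefficient function t (a,b), a,b ranging over index tuples.\<close>

type_synonym 'k tensor = "(nat \<Rightarrow> nat) \<times> (nat \<Rightarrow> nat) \<Rightarrow> 'k"

definition Idx :: "nat \<Rightarrow> ((nat \<Rightarrow> nat) \<times> (nat \<Rightarrow> nat)) set" where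
  "Idx m = ({..<m} \<rightarrow>\<^sub>E {..<m}) \<times> ({..<m} \<rightarrow>\<^sub>E {..<m})"

definition Tens :: "nat \<Rightarrow> 'k::field tensor set" where
  "Tens m = {t. \<forall>x. x \<notin> Idx m \<longrightarrow> t x = 0}"

definition tadd :: "'k::field tensor \<Rightarrow> 'k tensor \<Rightarrow> 'k tensor" where
  "tadd s t = (\<lambda>x. s x + t x)"

definition tsc :: "'k::field \<Rightarrow> 'k tensor \<Rightarrow> 'k tensor" where
  "tsc c t = (\<lambda>x. c * t x)"

text \<open>(g,h) is a pair of mutually inverse m x m matrices, i.e. g in GL(V), h = g^-1.\<close>
definition invpair :: "nat \<Rightarrow> (nat \<Rightarrow> nat \<Rightarrow> 'k::field) \<Rightarrow> (nat \<Rightarrow> nat \<Rightarrow> 'k) \<Rightarrow> bool" where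
  "invpair m g h \<longleftrightarrow> (\<forall>i<m. \<forall>j<m.
      (\<Sum>k<m. g i k * h k j) = (if i = j then 1 else 0) \<and>
      (\<Sum>k<m. h i k * g k j) = (if i = j then 1 else 0))"

text \<open>Action of g (with inverse h) on tensors: g acts on V by the matrix g,
  and on V^* contragrediently (alpha maps to alpha composed with g^-1).\<close>
definition act :: "nat \<Rightarrow> (nat \<Rightarrow> nat \<Rightarrow> 'k::field) \<Rightarrow> (nat \<Rightarrow> nat \<Rightarrow> 'k) \<Rightarrow> 'k tensor \<Rightarrow> 'k tensor" where
  "act m g h t = (\<lambda>(a, b). if (a, b) \<in> Idx m then
      (\<Sum>(a', b') \<in> Idx m. (\<Prod>l<m. h (a' l) (a l)) * (\<Prod>l<m. g (b l) (b' l)) * t (a', b'))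
    else 0)"

definition swp :: "nat \<Rightarrow> (nat \<Rightarrow> nat) \<Rightarrow> (nat \<Rightarrow> nat)" where
  "swp i a = a \<circ> transpose i (Suc i)"

text \<open>W^i tensor Lambda^2 W tensor W^(m-i-2), as the (-1)-eigenspace of the swap
  of W-factors i, i+1 inside W^(tensor m).\<close>
definition SW :: "nat \<Rightarrow> nat \<Rightarrow> 'k::field tensor set" where
  "SW m i = {t \<in> Tens m. \<forall>a b. t (swp i a, swp i b) = - t (a, b)}"

text \<open>(V^*)^i tensor S^2 V^* tensor (V^*)^(m-i-2) tensor V^(tensor m).\<close>
definition EL :: "nat \<Rightarrow> nat \<Rightarrow> 'k::field tensor set" where
  "EL m i = {t \<in> Tens m. \<forall>a b. t (swp i a, b) = t (a, b)}"

text \<open>(V^*)^(tensor m) tensor V^i tensor S^2 V tensor V^(m-i-2).\<close>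
definition ER :: "nat \<Rightarrow> nat \<Rightarrow> 'k::field tensor set" where
  "ER m i = {t \<in> Tens m. \<forall>a b. t (a, swp i b) = t (a, b)}"

text \<open>PS^m(W): families indexed by i = 0..m-2.\<close>
definition PSc :: "nat \<Rightarrow> (nat \<Rightarrow> 'k::field tensor) set" where
  "PSc m = {F. (\<forall>i < m - 1. F i \<in> SW m i) \<and> (\<forall>i \<ge> m - 1. F i = (\<lambda>_. 0))}"

text \<open>PE^m(V^*) tensor V^(tensor m) (+) (V^*)^(tensor m) tensor PE^m(V).\<close>
definition PEc :: "nat \<Rightarrow> ((nat \<Rightarrow> 'k::field tensor) \<times> (nat \<Rightarrow> 'k tensor)) set" where
  "PEc m = {(F, G). (\<forall>i < m - 1. F i \<in> EL m i \<and> G i \<in> ER m i) \<and>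
                    (\<forall>i \<ge> m - 1. F i = (\<lambda>_. 0) \<and> G i = (\<lambda>_. 0))}"

definition fadd :: "(nat \<Rightarrow> 'k::field tensor) \<Rightarrow> (nat \<Rightarrow> 'k tensor) \<Rightarrow> (nat \<Rightarrow> 'k tensor)" where
  "fadd F G = (\<lambda>i. tadd (F i) (G i))"
definition fsc :: "'k::field \<Rightarrow> (nat \<Rightarrow> 'k tensor) \<Rightarrow> (nat \<Rightarrow> 'k tensor)" where
  "fsc c F = (\<lambda>i. tsc c (F i))"
definition fam_act :: "nat \<Rightarrow> (nat \<Rightarrow> nat \<Rightarrow> 'k::field) \<Rightarrow> (nat \<Rightarrow> nat \<Rightarrow> 'k) \<Rightarrow> (nat \<Rightarrow> 'k tensor) \<Rightarrow> (nat \<Rightarrow> 'k tensor)" where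
  "fam_act m g h F = (\<lambda>i. act m g h (F i))"

definition padd where "padd x y = (fadd (fst x) (fst y), fadd (snd x) (snd y))"
definition psc where "psc c x = (fsc c (fst x), fsc c (snd x))"
definition pact where "pact m g h x = (fam_act m g h (fst x), fam_act m g h (snd x))"

definition iota :: "nat \<Rightarrow> (nat \<Rightarrow> 'k::field tensor) \<Rightarrow> 'k tensor" where
  "iota m F = (\<lambda>x. \<Sum>i < m - 1. F i x)"

definition kappa :: "nat \<Rightarrow> (nat \<Rightarrow> 'k::field tensor) \<times> (nat \<Rightarrow> 'k tensor) \<Rightarrow> 'k tensor" where
  "kappa m x = (\<lambda>y. \<Sum>i < m - 1. fst x i y + snd x i y)"

text \<open>ev^(tensor m) on W^(tensor m): e*_(a l) tensor e_(b l) evaluates to [a l = b l].\<close>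
definition evm :: "nat \<Rightarrow> 'k::field tensor \<Rightarrow> 'k" where
  "evm m t = (\<Sum>(a, b) \<in> Idx m. t (a, b) * (\<Prod>l<m. if a l = b l then 1 else 0))"

definition pim :: "nat \<Rightarrow> 'k::field tensor \<Rightarrow> 'k" where
  "pim m t = (\<Sum>(a, b) \<in> Idx m. t (a, b) *
      (\<Sum>\<sigma> \<in> {\<sigma>. \<sigma> permutes {..<m}}. of_int (sign \<sigma>) *
          (\<Prod>i<m. if a i = b (\<sigma> i) then 1 else 0)))"

definition phi_hom :: "nat \<Rightarrow> ((nat \<Rightarrow> 'k::field tensor) \<times> (nat \<Rightarrow> 'k tensor) \<Rightarrow> (nat \<Rightarrow> 'k tensor)) \<Rightarrow> bool" where
  "phi_hom m \<phi> \<longleftrightarrow>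
     (\<forall>x \<in> PEc m. \<phi> x \<in> PSc m) \<and>
     (\<forall>x \<in> PEc m. \<forall>y \<in> PEc m. \<phi> (padd x y) = fadd (\<phi> x) (\<phi> y)) \<and>
     (\<forall>c. \<forall>x \<in> PEc m. \<phi> (psc c x) = fsc c (\<phi> x)) \<and>
     (\<forall>g h. invpair m g h \<longrightarrow> (\<forall>x \<in> PEc m. \<phi> (pact m g h x) = fam_act m g h (\<phi> x)))"

definition psi_hom :: "nat \<Rightarrow> ('k::field tensor \<Rightarrow> 'k tensor) \<Rightarrow> bool" where
  "psi_hom m \<psi> \<longleftrightarrow>
     (\<forall>t \<in> Tens m. \<psi> t \<in> Tens m) \<and>
     (\<forall>s \<in> Tens m. \<forall>t \<in> Tens m. \<psi> (tadd s t) = tadd (\<psi> s) (\<psi> t)) \<and>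
     (\<forall>c. \<forall>t \<in> Tens m. \<psi> (tsc c t) = tsc c (\<psi> t)) \<and>
     (\<forall>g h. invpair m g h \<longrightarrow> (\<forall>t \<in> Tens m. \<psi> (act m g h t) = act m g h (\<psi> t)))"

end

theory Submission
  imports Defs
begin

definition psi :: "nat \<Rightarrow> 'k::field tensor \<Rightarrow> 'k tensor" where
  "psi m t = (\<lambda>x. if x \<in> Idx m then
     (\<Sum>\<sigma>\<in>{\<sigma>. \<sigma> permutes {..<m}}. of_int (sign \<sigma>) * t (fst x, snd x \<circ> \<sigma>)) else 0)"

lemma perm_fin: "finite {\<sigma>. \<sigma> permutes {..<m::nat}}"
  by (simp add: finite_permutations)

lemma comp_PiE:
  assumes "b \<in> {..<m} \<rightarrow>\<^sub>E {..<m::nat}" "\<sigma> permutes {..<m}"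
  shows "b \<circ> \<sigma> \<in> {..<m} \<rightarrow>\<^sub>E {..<m}"
  using assms unfolding PiE_def extensional_def Pi_def
  by (auto simp: permutes_not_in) (metis lessThan_iff permutes_in_image)

lemma Idx_comp:
  assumes "(a, b) \<in> Idx m" "\<sigma> permutes {..<m}"
  shows "(a, b \<circ> \<sigma>) \<in> Idx m" "(a \<circ> \<sigma>, b) \<in> Idx m"
  using assms comp_PiE unfolding Idx_def by auto

lemma psi_Tens: "psi m t \<in> Tens m"
  unfolding Tens_def psi_def by auto

lemma psi_add: "psi m (tadd s t) = tadd (psi m s) (psi m t)"
  unfolding psi_def tadd_def by (auto simp: sum.distrib algebra_simps)

lemma psi_sc: "psi m (tsc c t) = tsc c (psi m t)"
  unfolding psi_def tsc_def by (auto simp: sum_distrib_left algebra_simps)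

lemma psi_sum: "finite I \<Longrightarrow> psi m (\<lambda>y. \<Sum>i\<in>I. f i y) = (\<lambda>y. \<Sum>i\<in>I. psi m (f i) y)"
  unfolding psi_def by (rule ext) (auto simp: sum_distrib_left intro: sum.swap)

lemma psi_zero: "psi m (\<lambda>_. 0) = (\<lambda>_. 0)"
  unfolding psi_def by auto

lemma two_ne0: "CHAR('k::field) > 2 \<Longrightarrow> (2::'k) \<noteq> 0"
proof
  assume "CHAR('k) > 2" "(2::'k) = 0"
  then have "of_nat 2 = (0::'k)" by simp
  then have "CHAR('k) dvd 2" by (simp only: of_nat_eq_0_iff_char_dvd)
  with \<open>CHAR('k) > 2\<close> show False using dvd_imp_le by fastforce
qed

lemma transp_perm: "i < m - 1 \<Longrightarrow> transpose i (Suc i) permutes {..<m}"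
  by (rule permutes_swap_id) auto

lemma swp_swp: "swp i (swp i a) = a"
  unfolding swp_def by (auto simp: comp_assoc)

lemma sign_tau: "\<sigma> permutes {..<m} \<Longrightarrow> i < m - 1 \<Longrightarrow>
   sign (\<sigma> \<circ> transpose i (Suc i)) = - sign \<sigma> \<and> sign (transpose i (Suc i) \<circ> \<sigma>) = - sign \<sigma>"
  using sign_compose[of \<sigma> "transpose i (Suc i)"] sign_compose[of "transpose i (Suc i)" \<sigma>]
  using permutes_imp_permutation[OF _ transp_perm[of i m]] permutes_imp_permutation[of "{..<m}" \<sigma>]
  by (simp add: sign_swap_id)

lemma psi_ER:
  assumes "t \<in> ER m i" "i < m - 1" "CHAR('k::field) > 2"
  shows "psi m (t::'k tensor) = (\<lambda>_. 0)"
proof (rule ext)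
  fix x
  let ?T = "transpose i (Suc i)"
  let ?P = "{\<sigma>. \<sigma> permutes {..<m}}"
  let ?S = "\<Sum>\<sigma>\<in>?P. of_int (sign \<sigma>) * t (fst x, snd x \<circ> \<sigma>)"
  have "?S = (\<Sum>\<sigma>\<in>?P. of_int (sign (\<sigma> \<circ> ?T)) * t (fst x, snd x \<circ> (\<sigma> \<circ> ?T)))"
    by (rule sum_permutations_compose_right[OF transp_perm[OF assms(2)]])
  also have "\<dots> = (\<Sum>\<sigma>\<in>?P. - (of_int (sign \<sigma>) * t (fst x, snd x \<circ> \<sigma>)))"
  proof (rule sum.cong[OF refl])
    fix \<sigma> assume "\<sigma> \<in> ?P"
    then have "sign (\<sigma> \<circ> ?T) = - sign \<sigma>" using sign_tau assms(2) by auto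
    moreover have "t (fst x, snd x \<circ> (\<sigma> \<circ> ?T)) = t (fst x, snd x \<circ> \<sigma>)"
    proof -
      have "snd x \<circ> (\<sigma> \<circ> ?T) = swp i (snd x \<circ> \<sigma>)" by (simp add: swp_def comp_assoc)
      then show ?thesis using assms(1) unfolding ER_def by simp
    qed
    ultimately show "of_int (sign (\<sigma> \<circ> ?T)) * t (fst x, snd x \<circ> (\<sigma> \<circ> ?T))
        = - (of_int (sign \<sigma>) * t (fst x, snd x \<circ> \<sigma>))" by simp
  qed
  also have "\<dots> = - ?S" by (simp add: sum_negf)
  finally have "2 * ?S = 0" by simp
  then have "?S = 0" using two_ne0[OF assms(3)] by simp
  then show "psi m t x = 0" unfolding psi_def by simp
qed

lemma Idx_swp:
  assumes "i < m - 1"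
  shows "((swp i a, swp i b) \<in> Idx m) = ((a, b) \<in> Idx m)"
proof
  have T: "transpose i (Suc i) permutes {..<m}" using transp_perm[OF assms] .
  show "(a, b) \<in> Idx m" if "(swp i a, swp i b) \<in> Idx m"
    using Idx_comp(1)[OF Idx_comp(2)[OF that T] T] swp_swp[of i a] swp_swp[of i b]
    unfolding swp_def by simp
  show "(swp i a, swp i b) \<in> Idx m" if "(a, b) \<in> Idx m"
    using Idx_comp(1)[OF Idx_comp(2)[OF that T] T] unfolding swp_def by simp
qed

lemma psi_EL:
  assumes "t \<in> EL m i" "i < m - 1"
  shows "psi m (t::'k::field tensor) \<in> SW m i"
  unfolding SW_def
proof (intro CollectI conjI allI psi_Tens)
  fix a b
  let ?T = "transpose i (Suc i)"
  let ?P = "{\<sigma>. \<sigma> permutes {..<m}}"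
  show "psi m t (swp i a, swp i b) = - psi m t (a, b)"
  proof (cases "(a, b) \<in> Idx m")
    case False
    then show ?thesis using Idx_swp[OF assms(2)] unfolding psi_def by simp
  next
    case True
    have "(\<Sum>\<sigma>\<in>?P. of_int (sign \<sigma>) * t (swp i a, swp i b \<circ> \<sigma>))
        = (\<Sum>\<sigma>\<in>?P. of_int (sign (?T \<circ> \<sigma>)) * t (swp i a, swp i b \<circ> (?T \<circ> \<sigma>)))"
      by (rule setum_permutations_compose_left[OF transp_perm[OF assms(2)]])
    also have "\<dots> = (\<Sum>\<sigma>\<in>?P. - (of_int (sign \<sigma>) * t (a, b \<circ> \<sigma>)))"
    proof (rule sum.cong[OF refl])
      fix \<sigma> assume "\<sigma> \<in> ?P"
      then have "sign (?T \<circ> \<sigma>) = - sign \<sigma>" using sign_tau assms(2) by auto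
      moreover have "swp i b \<circ> (?T \<circ> \<sigma>) = b \<circ> \<sigma>"
      proof -
        have "b \<circ> ?T \<circ> (?T \<circ> \<sigma>) = b \<circ> (?T \<circ> ?T) \<circ> \<sigma>" by (simp only: comp_assoc)
        then show ?thesis unfolding swp_def by simp
      qed
      moreover have "t (swp i a, b \<circ> \<sigma>) = t (a, b \<circ> \<sigma>)"
        using assms(1) unfolding EL_def by simp
      ultimately show "of_int (sign (?T \<circ> \<sigma>)) * t (swp i a, swp i b \<circ> (?T \<circ> \<sigma>))
          = - (of_int (sign \<sigma>) * t (a, b \<circ> \<sigma>))" by simp
    qed
    also have "\<dots> = - (\<Sum>\<sigma>\<in>?P. of_int (sign \<sigma>) * t (a, b \<circ> \<sigma>))" by (simp add: sum_negf)
    finally show ?thesis using True Idx_swp[OF assms(2)] unfolding psi_def by simp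
  qed
qed

lemma act_key:
  assumes s: "\<sigma> permutes {..<m}"
  shows "(\<Sum>(a', b')\<in>Idx m. (\<Prod>l<m. h (a' l) (a l)) * (\<Prod>l<m. g (b l) (b' l)) * t (a', b' \<circ> \<sigma>))
       = (\<Sum>(a', b')\<in>Idx m. (\<Prod>l<m. h (a' l) (a l)) * (\<Prod>l<m. g (b (\<sigma> l)) (b' l)) * (t (a', b') :: 'k::field))"
proof (rule sum.reindex_bij_witness[where i = "\<lambda>(a', c). (a', c \<circ> inv \<sigma>)" and j = "\<lambda>(a', b'). (a', b' \<circ> \<sigma>)"])
  have si: "inv \<sigma> permutes {..<m}" using permutes_inv[OF s] .
  have c1: "c \<circ> inv \<sigma> \<circ> \<sigma> = c" for c :: "nat \<Rightarrow> nat"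
    by (simp add: comp_assoc permutes_inv_o[OF s])
  have c2: "c \<circ> \<sigma> \<circ> inv \<sigma> = c" for c :: "nat \<Rightarrow> nat"
    by (simp add: comp_assoc permutes_inv_o[OF s])
  fix y assume y: "y \<in> Idx m"
  obtain a' c where yy: "y = (a', c)" by fastforce
  show "(case (case y of (a', b') \<Rightarrow> (a', b' \<circ> \<sigma>)) of (a', c) \<Rightarrow> (a', c \<circ> inv \<sigma>)) = y"
    using c2 yy by simp
  show "(case y of (a', b') \<Rightarrow> (a', b' \<circ> \<sigma>)) \<in> Idx m"
    using Idx_comp(1)[OF _ s] y yy by simp
  show "(case (case y of (a', c) \<Rightarrow> (a', c \<circ> inv \<sigma>)) of (a', b') \<Rightarrow> (a', b' \<circ> \<sigma>)) = y"
    using c1 yy by simp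
  show "(case y of (a', c) \<Rightarrow> (a', c \<circ> inv \<sigma>)) \<in> Idx m"
    using Idx_comp(1)[OF _ si] y yy by simp
  have pr: "(\<Prod>l<m. g (b (\<sigma> l)) (c (\<sigma> l))) = (\<Prod>l<m. g (b l) (c l))"
    using prod.permute[OF s, of "\<lambda>l. g (b l) (c l)"] by (simp add: o_def)
  show "(case (case y of (a', b') \<Rightarrow> (a', b' \<circ> \<sigma>)) of
          (a', b') \<Rightarrow> (\<Prod>l<m. h (a' l) (a l)) * (\<Prod>l<m. g (b (\<sigma> l)) (b' l)) * t (a', b')) =
        (case y of (a', b') \<Rightarrow> (\<Prod>l<m. h (a' l) (a l)) * (\<Prod>l<m. g (b l) (b' l)) * t (a', b' \<circ> \<sigma>))"
    using yy pr by simp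
qed

lemma psi_act: "psi m (act m g h t) = act m g h (psi m (t :: 'k::field tensor))"
proof (rule ext)
  fix x :: "(nat \<Rightarrow> nat) \<times> (nat \<Rightarrow> nat)"
  obtain a b where x: "x = (a, b)" by fastforce
  let ?P = "{\<sigma>. \<sigma> permutes {..<m}}"
  let ?H = "\<lambda>a'. \<Prod>l<m. h (a' l) (a l)"
  show "psi m (act m g h t) x = act m g h (psi m t) x"
  proof (cases "(a, b) \<in> Idx m")
    case False
    then show ?thesis unfolding psi_def act_def x by simp
  next
    case True
    have "psi m (act m g h t) x = (\<Sum>\<sigma>\<in>?P. of_int (sign \<sigma>) *
        (\<Sum>(a', b')\<in>Idx m. ?H a' * (\<Prod>l<m. g (b (\<sigma> l)) (b' l)) * t (a', b')))"
      unfolding psi_def x using True Idx_comp(1)[OF True]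
      by (auto intro!: sum.cong simp: act_def)
    also have "\<dots> = (\<Sum>\<sigma>\<in>?P. of_int (sign \<sigma>) *
        (\<Sum>(a', b')\<in>Idx m. ?H a' * (\<Prod>l<m. g (b l) (b' l)) * t (a', b' \<circ> \<sigma>)))"
      by (intro sum.cong refl) (simp add: act_key)
    also have "\<dots> = (\<Sum>\<sigma>\<in>?P. (\<Sum>(a', b')\<in>Idx m. of_int (sign \<sigma>) *
         (?H a' * (\<Prod>l<m. g (b l) (b' l)) * t (a', b' \<circ> \<sigma>))))"
      by (simp add: sum_distrib_left split_def)
    also have "\<dots> = (\<Sum>(a', b')\<in>Idx m. \<Sum>\<sigma>\<in>?P. of_int (sign \<sigma>) *
         (?H a' * (\<Prod>l<m. g (b l) (b' l)) * t (a', b' \<circ> \<sigma>)))"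
      unfolding split_def by (rule sum.swap)
    also have "\<dots> = (\<Sum>(a', b')\<in>Idx m. ?H a' * (\<Prod>l<m. g (b l) (b' l)) * psi m t (a', b'))"
      unfolding psi_def
      by (intro sum.cong refl) (auto simp: sum_distrib_left algebra_simps)
    also have "\<dots> = act m g h (psi m t) x"
      unfolding act_def x using True by simp
    finally show ?thesis .
  qed
qed

lemma ind_prod:
  assumes "a \<in> {..<m} \<rightarrow>\<^sub>E {..<m::nat}" "c \<in> {..<m} \<rightarrow>\<^sub>E {..<m}"
  shows "(\<Prod>l<m. if a l = c l then (1::'k::field) else 0) = (if a = c then 1 else 0)"
proof (cases "a = c")
  case False
  then obtain l where "l < m" "a l \<noteq> c l" using assms PiE_ext[of a "{..<m}" _ c] by blast
  then show ?thesis using False by (intro trans[OF prod_zero]) auto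
qed simp

lemma ind_prod2:
  assumes "a \<in> {..<m} \<rightarrow>\<^sub>E {..<m::nat}" "b \<in> {..<m} \<rightarrow>\<^sub>E {..<m}" "\<sigma> permutes {..<m}"
  shows "(\<Prod>l<m. if a l = b (\<sigma> l) then (1::'k::field) else 0) = (if a = b \<circ> \<sigma> then 1 else 0)"
  using ind_prod[OF assms(1) comp_PiE[OF assms(2,3)]] by simp

lemma sum_ind: "finite S \<Longrightarrow> a \<in> S \<Longrightarrow> (\<Sum>b\<in>S. f b * (if a = b then (1::'k::field) else 0)) = f a"
proof -
  assume "finite S" "a \<in> S"
  have "(\<Sum>b\<in>S. f b * (if a = b then (1::'k) else 0)) = (\<Sum>b\<in>S. if a = b then f b else 0)"
    by (rule sum.cong) auto
  then show ?thesis using \<open>finite S\<close> \<open>a \<in> S\<close> by simp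
qed

lemma psi_ev: "evm m (psi m t) = pim m (t :: 'k::field tensor)"
proof -
  let ?E = "{..<m} \<rightarrow>\<^sub>E {..<m::nat}"
  let ?P = "{\<sigma>. \<sigma> permutes {..<m}}"
  have "evm m (psi m t) = (\<Sum>a\<in>?E. \<Sum>b\<in>?E. psi m t (a, b) * (if a = b then 1 else 0))"
    unfolding evm_def Idx_def sum.cartesian_product[symmetric]
    by (intro sum.cong refl) (simp add: ind_prod)
  also have "\<dots> = (\<Sum>a\<in>?E. \<Sum>\<sigma>\<in>?P. of_int (sign \<sigma>) * t (a, a \<circ> \<sigma>))"
  proof (rule sum.cong[OF refl])
    fix a assume a: "a \<in> ?E"
    have "(\<Sum>b\<in>?E. psi m t (a, b) * (if a = b then 1 else 0)) = psi m t (a, a)"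
      by (rule sum_ind[OF finite_PiE a]) auto
    then show "(\<Sum>b\<in>?E. psi m t (a, b) * (if a = b then 1 else 0)) = (\<Sum>\<sigma>\<in>?P. of_int (sign \<sigma>) * t (a, a \<circ> \<sigma>))"
      using a by (simp add: psi_def Idx_def)
  qed
  also have "\<dots> = (\<Sum>\<sigma>\<in>?P. of_int (sign \<sigma>) * (\<Sum>a\<in>?E. t (a, a \<circ> \<sigma>)))"
    by (subst sum.swap) (simp add: sum_distrib_left)
  also have "\<dots> = (\<Sum>\<sigma>\<in>?P. of_int (sign (inv \<sigma>)) * (\<Sum>a\<in>?E. t (a, a \<circ> inv \<sigma>)))"
    by (rule sum_permutations_inverse)
  also have "\<dots> = (\<Sum>\<sigma>\<in>?P. of_int (sign \<sigma>) * (\<Sum>b\<in>?E. t (b \<circ> \<sigma>, b)))"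
  proof (intro sum.cong refl)
    fix \<sigma> assume "\<sigma> \<in> ?P"
    then have s: "\<sigma> permutes {..<m}" by simp
    have si: "inv \<sigma> permutes {..<m}" using permutes_inv[OF s] .
    have c1: "c \<circ> inv \<sigma> \<circ> \<sigma> = c" for c :: "nat \<Rightarrow> nat"
      by (simp add: comp_assoc permutes_inv_o[OF s])
    have c2: "c \<circ> \<sigma> \<circ> inv \<sigma> = c" for c :: "nat \<Rightarrow> nat"
      by (simp add: comp_assoc permutes_inv_o[OF s])
    have "sign (inv \<sigma>) = sign \<sigma>"
      using sign_inverse[OF permutes_imp_permutation[OF _ s]] by simp
    moreover have "(\<Sum>a\<in>?E. t (a, a \<circ> inv \<sigma>)) = (\<Sum>b\<in>?E. t (b \<circ> \<sigma>, b))"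
      by (rule sum.reindex_bij_witness[where i = "\<lambda>b. b \<circ> \<sigma>" and j = "\<lambda>a. a \<circ> inv \<sigma>"])
        (auto simp: c1 c2 comp_PiE[OF _ s] comp_PiE[OF _ si])
    ultimately show "of_int (sign (inv \<sigma>)) * (\<Sum>a\<in>?E. t (a, a \<circ> inv \<sigma>))
        = of_int (sign \<sigma>) * (\<Sum>b\<in>?E. t (b \<circ> \<sigma>, b))" by simp
  qed
  also have "\<dots> = (\<Sum>\<sigma>\<in>?P. \<Sum>b\<in>?E. \<Sum>a\<in>?E. of_int (sign \<sigma>) * (t (a, b) * (if a = b \<circ> \<sigma> then 1 else 0)))"
  proof (intro sum.cong refl)
    fix \<sigma> assume "\<sigma> \<in> ?P"
    then have s: "\<sigma> permutes {..<m}" by simp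
    show "of_int (sign \<sigma>) * (\<Sum>b\<in>?E. t (b \<circ> \<sigma>, b)) =
        (\<Sum>b\<in>?E. \<Sum>a\<in>?E. of_int (sign \<sigma>) * (t (a, b) * (if a = b \<circ> \<sigma> then 1 else 0)))"
      unfolding sum_distrib_left
      by (intro sum.cong refl) (simp add: if_distrib comp_PiE[OF _ s] sum.delta finite_PiE cong: if_cong)
  qed
  also have "\<dots> = (\<Sum>a\<in>?E. \<Sum>b\<in>?E. \<Sum>\<sigma>\<in>?P. of_int (sign \<sigma>) * (t (a, b) * (if a = b \<circ> \<sigma> then 1 else 0)))"
    apply (subst sum.swap)
    apply (subst sum.swap[where A = ?P])
    apply (rule sum.cong[OF refl])
    apply (rule sum.swap)
    done
  also have "\<dots> = pim m t"
    unfolding pim_def Idx_def sum.cartesian_product[symmetric]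
    by (intro sum.cong refl) (simp add: ind_prod2 sum_distrib_left algebra_simps)
  finally show ?thesis .
qed

theorem lemma2p2:
  fixes m :: nat
  assumes "alg_closed_field TYPE('k::field)"
    and "CHAR('k) > 2"
    and "m \<ge> 2"
  shows "\<exists>(\<phi> :: (nat \<Rightarrow> 'k tensor) \<times> (nat \<Rightarrow> 'k tensor) \<Rightarrow> (nat \<Rightarrow> 'k tensor))
           (\<psi> :: 'k tensor \<Rightarrow> 'k tensor).
           phi_hom m \<phi> \<and> psi_hom m \<psi> \<and>
           (\<forall>x \<in> PEc m. iota m (\<phi> x) = \<psi> (kappa m x)) \<and>
           (\<forall>t \<in> Tens m. evm m (\<psi> t) = pim m t)"
proof (intro exI conjI)
  let ?phi = "\<lambda>x :: (nat \<Rightarrow> 'k tensor) \<times> (nat \<Rightarrow> 'k tensor). (\<lambda>i. psi m (fst x i))"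
  show "phi_hom m ?phi"
    unfolding phi_hom_def
  proof (intro conjI ballI allI impI)
    fix x :: "(nat \<Rightarrow> 'k tensor) \<times> (nat \<Rightarrow> 'k tensor)" assume x: "x \<in> PEc m"
    show "?phi x \<in> PSc m"
      using x unfolding PSc_def PEc_def by (auto simp: psi_EL psi_zero)
  next
    fix x y :: "(nat \<Rightarrow> 'k tensor) \<times> (nat \<Rightarrow> 'k tensor)"
    show "?phi (padd x y) = fadd (?phi x) (?phi y)"
      by (simp add: padd_def fadd_def psi_add)
  next
    fix c and x :: "(nat \<Rightarrow> 'k tensor) \<times> (nat \<Rightarrow> 'k tensor)"
    show "?phi (psc c x) = fsc c (?phi x)"
      by (simp add: psc_def fsc_def psi_sc)
  next
    fix g h and x :: "(nat \<Rightarrow> 'k tensor) \<times> (nat \<Rightarrow> 'k tensor)"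
    show "?phi (pact m g h x) = fam_act m g h (?phi x)"
      by (simp add: pact_def fam_act_def psi_act)
  qed
  show "psi_hom m (psi m)"
    unfolding psi_hom_def by (simp add: psi_Tens psi_add psi_sc psi_act)
  show "\<forall>x \<in> PEc m. iota m (?phi x) = psi m (kappa m x)"
  proof
    fix x :: "(nat \<Rightarrow> 'k tensor) \<times> (nat \<Rightarrow> 'k tensor)" assume x: "x \<in> PEc m"
    have G0: "psi m (snd x i) = (\<lambda>_. 0)" if "i < m - 1" for i
      using x that psi_ER[OF _ that assms(2)] unfolding PEc_def by auto
    have "psi m (kappa m x) = (\<lambda>y. \<Sum>i<m - 1. psi m (\<lambda>y. fst x i y + snd x i y) y)"
      unfolding kappa_def by (rule psi_sum) simp
    also have "\<dots> = (\<lambda>y. \<Sum>i<m - 1. psi m (fst x i) y)"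
      using psi_add[of m "fst x i" "snd x i" for i] G0 unfolding tadd_def
      by (intro ext sum.cong refl) simp
    finally show "iota m (?phi x) = psi m (kappa m x)"
      unfolding iota_def by simp
  qed
  show "\<forall>t \<in> Tens m. evm m (psi m t) = pim m t"
    by (simp add: psi_ev)
qed

end
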